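(* Let $\Omega$ be a discrete filtered set with upper closure $\tilde\Omega$. Then the closure $\overline{\mathcal{S}_\Omega}$ of $\mathcal{S}_\Omega$ in $\mathbb{R}\times\mathbb{C}$ equals $\mathcal{S}_{\tilde\Omega}$, and $\mathcal{M}_\Omega=\mathcal{M}_{\tilde\Omega}$.
   Context: A discrete filtered set (d.f.s.) is a family $\Omega=(\Omega_L)_{L\in\mathbb{R}_{\ge0}}$ of finite subsets of $\mathbb{C}$ with $\Omega_{L_1}\subseteq\Omega_{L_2}$ for $L_1\le L_2$ and $\Omega_\delta=\emptyset$ for some $\delta>0$. Its upper closure is $\tilde\Omega_L=\bigcap_{\varepsilon>0}\Omega_{L+\varepsilon}$ ($L\ge0$), which is again a d.f.s. For a d.f.s. $\Omega$ set $\mathcal{S}_\Omega=\{(\lambda,\omega)\in\mathbb{R}\times\mathbb{C}\mid \lambda\ge0,\ \omega\in\Omega_\lambda\}$ and $\mathcal{M}_\Omega=(\mathbb{R}\times\mathbb{C})\setminus\overline{\mathcal{S}_\Omega}$, where the bar denotes closure in $\mathbb{R}\times\mathbb{C}$. *)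

theory Defs
  imports "HOL-Analysis.Analysis"
begin

text \<open>Values at negative
  indices are irrelevant (the family is only indexed by nonnegative reals).\<close>
definition dfs :: "(real \<Rightarrow> complex set) \<Rightarrow> bool" where
  "dfs \<Omega> \<longleftrightarrow>
     (\<forall>L\<ge>0. finite (\<Omega> L)) \<and>
     (\<forall>L1 L2. 0 \<le> L1 \<longrightarrow> L1 \<le> L2 \<longrightarrow> \<Omega> L1 \<subseteq> \<Omega> L2) \<and>
     (\<exists>\<delta>>0. \<Omega> \<delta> = {})"

definition upper_closure :: "(real \<Rightarrow> complex set) \<Rightarrow> (real \<Rightarrow> complex set)" where
  "upper_closure \<Omega> = (\<lambda>L. \<Inter>\<epsilon>\<in>{0<..}. \<Omega> (L + \<epsilon>))"

definition S_set :: "(real \<Rightarrow> complex set) \<Rightarrow> (real \<times> complex) set" where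
  "S_set \<Omega> = {(l, w). l \<ge> 0 \<and> w \<in> \<Omega> l}"

definition M_set :: "(real \<Rightarrow> complex set) \<Rightarrow> (real \<times> complex) set" where
  "M_set \<Omega> = UNIV - closure (S_set \<Omega>)"

end

theory Submission
  imports Defs
begin

lemma closure_sub:
  assumes d: "dfs \<Omega>" and x: "x \<in> closure (S_set \<Omega>)"
  shows "x \<in> S_set (upper_closure \<Omega>)"
proof -
  obtain l w where xe: "x = (l, w)" by (cases x)
  have fin: "\<And>L. L \<ge> 0 \<Longrightarrow> finite (\<Omega> L)" and mono: "\<And>L1 L2. 0 \<le> L1 \<Longrightarrow> L1 \<le> L2 \<Longrightarrow> \<Omega> L1 \<subseteq> \<Omega> L2"
    using d unfolding dfs_def by auto
  have l0: "l \<ge> 0"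
  proof (rule ccontr)
    assume "\<not> l \<ge> 0"
    let ?U = "{..<0::real} \<times> (UNIV::complex set)"
    have "open ?U" by (intro open_Times) auto
    moreover have "x \<in> ?U" using \<open>\<not> l \<ge> 0\<close> xe by auto
    ultimately obtain y where "y \<in> ?U" "y \<in> S_set \<Omega>"
    proof -
      have "S_set \<Omega> \<inter> ?U \<noteq> {}"
        using x[unfolded closure_iff_nhds_not_empty] \<open>open ?U\<close> \<open>x \<in> ?U\<close> by blast
      then show ?thesis using that by blast
    qed
    then show False by (auto simp: S_set_def)
  qed
  have "w \<in> \<Omega> (l + e)" if e: "e > 0" for e
  proof (rule ccontr)
    assume nw: "w \<notin> \<Omega> (l + e)"
    let ?U = "{..<l+e} \<times> (- \<Omega> (l + e))"
    have "closed (\<Omega> (l + e))" using fin[of "l+e"] l0 e by (simp add: finite_imp_closed)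
    hence "open ?U" by (intro open_Times) auto
    moreover have "x \<in> ?U" using nw xe e by auto
    ultimately obtain y where "y \<in> ?U" "y \<in> S_set \<Omega>"
    proof -
      have "S_set \<Omega> \<inter> ?U \<noteq> {}"
        using x[unfolded closure_iff_nhds_not_empty] \<open>open ?U\<close> \<open>x \<in> ?U\<close> by blast
      then show ?thesis using that by blast
    qed
    then obtain a z where "y = (a, z)" "a < l + e" "a \<ge> 0" "z \<in> \<Omega> a" "z \<notin> \<Omega> (l+e)"
      by (auto simp: S_set_def)
    then show False using mono[of a "l+e"] by auto
  qed
  then show ?thesis using xe l0 by (auto simp: S_set_def upper_closure_def)
qed

lemma sub_closure:
  assumes x: "x \<in> S_set (upper_closure \<Omega>)"
  shows "x \<in> closure (S_set \<Omega>)"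
proof -
  obtain l w where xe: "x = (l, w)" and l0: "l \<ge> 0" and w: "\<And>e. e > 0 \<Longrightarrow> w \<in> \<Omega> (l + e)"
    using x by (auto simp: S_set_def upper_closure_def)
  define f where "f n = (l + 1 / (real n + 1), w)" for n :: nat
  have "\<And>n. f n \<in> S_set \<Omega>"
    using w l0 unfolding f_def S_set_def by (auto intro!: add_nonneg_nonneg)
  moreover have "f \<longlonglongrightarrow> x"
  proof -
    have "(\<lambda>n. l + 1 / (real n + 1)) \<longlonglongrightarrow> l + 0"
    proof (intro tendsto_add tendsto_const)
      show "(\<lambda>n. 1 / (real n + 1)) \<longlonglongrightarrow> 0"
        using LIMSEQ_inverse_real_of_nat by (simp add: inverse_eq_divide add.commute)
    qed
    then show ?thesis unfolding f_def xe by (intro tendsto_Pair) auto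
  qed
  ultimately show ?thesis by (meson closure_sequential)
qed

theorem lemma2p4:
  assumes "dfs \<Omega>"
  shows "closure (S_set \<Omega>) = S_set (upper_closure \<Omega>) \<and>
         M_set \<Omega> = M_set (upper_closure \<Omega>)"
proof -
  have eq: "closure (S_set \<Omega>) = S_set (upper_closure \<Omega>)"
    using closure_sub[OF assms] sub_closure by blast
  hence "closed (S_set (upper_closure \<Omega>))" by (metis closed_closure)
  hence "closure (S_set (upper_closure \<Omega>)) = S_set (upper_closure \<Omega>)" by (rule closure_closed)
  with eq show ?thesis unfolding M_set_def by simp
qed

end
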